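(* Let $\mathbf a=(a_1,\ldots,a_n)\in\mathbb Z_{\geq1}^n$ and $\mathbf b=(b_1,\ldots,b_m)\in\mathbb Z_{\geq1}^m$ with $\gcd(a_i,b_j)=1$ for all $1\leq i\leq n$ and $1\leq j\leq m$. Then the generators $\mathbf g_{i,j}$ are all minimal solutions, and the set of extreme points of $\mathrm{conv}(\mathcal H(\mathbf a,\mathbf b))$ is $\{\mathbf 0\}\cup\{\mathbf g_{i,j}:1\leq i\leq n,\ 1\leq j\leq m\}$.
   Context: A solution is a pair $(\mathbf x,\mathbf y)\in\mathbb Z_{\geq0}^n\times\mathbb Z_{\geq0}^m$ with $\sum_i x_ia_i=\sum_j y_jb_j$; it is minimal if it is nonzero and cannot be written as the sum of two nonzero solutions. $\mathcal H(\mathbf a,\mathbf b)$ is the set of minimal solutions (the Hilbert basis of the cone $\{(\mathbf x,\mathbf y)\in\mathbb R_{\geq0}^{n+m}:\mathbf a\cdot\mathbf x=\mathbf b\cdot\mathbf y\}$, which by convention here also contains $\mathbf 0$ when taking its convex hull). With $\mathbf e_k$ the $k$th standard unit vector of $\mathbb R^{n+m}$, the generator $\mathbf g_{i,j}=b_j\mathbf e_i+a_i\mathbf e_{n+j}$ is the solution with only nonzero coordinates $x_i=b_j$, $y_j=a_i$. *)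

theory Defs
  imports "HOL-Analysis.Analysis"
begin

text \<open>A solution is a pair (x,y) of nonnegative integer vectors indexed by the finite
  types 'n and 'm (so n = CARD('n), m = CARD('m)) with a.x = b.y.\<close>

definition is_solution :: "('n::finite \<Rightarrow> nat) \<Rightarrow> ('m::finite \<Rightarrow> nat)
    \<Rightarrow> ('n \<Rightarrow> nat) \<times> ('m \<Rightarrow> nat) \<Rightarrow> bool" where
  "is_solution a b s \<longleftrightarrow> (\<Sum>i\<in>UNIV. fst s i * a i) = (\<Sum>j\<in>UNIV. snd s j * b j)"

definition zero_sol :: "('n \<Rightarrow> nat) \<times> ('m \<Rightarrow> nat)" where
  "zero_sol = ((\<lambda>_. 0), (\<lambda>_. 0))"

definition add_sol :: "('n \<Rightarrow> nat) \<times> ('m \<Rightarrow> nat) \<Rightarrow> ('n \<Rightarrow> nat) \<times> ('m \<Rightarrow> nat)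
    \<Rightarrow> ('n \<Rightarrow> nat) \<times> ('m \<Rightarrow> nat)" where
  "add_sol s t = ((\<lambda>i. fst s i + fst t i), (\<lambda>j. snd s j + snd t j))"

definition is_minimal_solution :: "('n::finite \<Rightarrow> nat) \<Rightarrow> ('m::finite \<Rightarrow> nat)
    \<Rightarrow> ('n \<Rightarrow> nat) \<times> ('m \<Rightarrow> nat) \<Rightarrow> bool" where
  "is_minimal_solution a b s \<longleftrightarrow> is_solution a b s \<and> s \<noteq> zero_sol \<and>
     \<not> (\<exists>u v. is_solution a b u \<and> is_solution a b v \<and> u \<noteq> zero_sol \<and> v \<noteq> zero_sol
              \<and> s = add_sol u v)"

definition hilbert_basis :: "('n::finite \<Rightarrow> nat) \<Rightarrow> ('m::finite \<Rightarrow> nat)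
    \<Rightarrow> (('n \<Rightarrow> nat) \<times> ('m \<Rightarrow> nat)) set" where
  "hilbert_basis a b = {s. is_minimal_solution a b s}"

definition emb :: "('n::finite \<Rightarrow> nat) \<times> ('m::finite \<Rightarrow> nat) \<Rightarrow> (real^'n) \<times> (real^'m)" where
  "emb s = ((\<chi> i. real (fst s i)), (\<chi> j. real (snd s j)))"

definition gen :: "('n \<Rightarrow> nat) \<Rightarrow> ('m \<Rightarrow> nat) \<Rightarrow> 'n \<Rightarrow> 'm
    \<Rightarrow> ('n \<Rightarrow> nat) \<times> ('m \<Rightarrow> nat)" where
  "gen a b i j = ((\<lambda>k. if k = i then b j else 0), (\<lambda>k. if k = j then a i else 0))"

end

theory Submission
  imports Defs "HOL-Library.Multiset"
begin


lemma sum_list_count: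
  fixes f :: "'n::finite \<Rightarrow> nat"
  shows "sum_list (map f S) = (\<Sum>i\<in>UNIV. count_list S i * f i)"
proof (induction S)
  case Nil then show ?case by simp
next
  case (Cons c S)
  have "(\<Sum>i\<in>UNIV. count_list (c # S) i * f i)
      = (\<Sum>i\<in>UNIV. (if i = c then f i else 0) + count_list S i * f i)"
    by (rule sum.cong) (auto simp: algebra_simps)
  also have "\<dots> = f c + (\<Sum>i\<in>UNIV. count_list S i * f i)"
    by (simp add: sum.distrib)
  finally show ?case using Cons by simp
qed

lemma length_count:
  fixes S :: "'n::finite list"
  shows "length S = (\<Sum>i\<in>UNIV. count_list S i)"
  using sum_list_count[of "\<lambda>_. 1" S] by (simp add: sum_list_triv)

lemma sum_list_ge_length:
  assumes "\<forall>i. f i \<ge> (1::nat)"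
  shows "sum_list (map f S) \<ge> length S"
proof (induction S)
  case (Cons c S)
  have "f c \<ge> 1" using assms by blast
  then show ?case using Cons by simp
qed simp

lemma count_take_le: "count_list (take k xs) i \<le> count_list xs i"
  by (metis append_take_drop_id count_list_append le_add1)

lemma count_drop_le: "count_list (drop k xs) i \<le> count_list xs i"
  by (metis append_take_drop_id count_list_append le_add2)

lemma take_split: "k \<le> k' \<Longrightarrow> take k' xs = take k xs @ drop k (take k' xs)"
  by (metis append_take_drop_id min.absorb1 take_take)

lemma dvd_lt_eq:
  fixes \<alpha> \<beta> A :: nat
  assumes dv: "int A dvd int \<beta> - int \<alpha>" and l1: "\<alpha> < A" and l2: "\<beta> < A"
  shows "\<alpha> = \<beta>"
proof (rule ccontr)
  assume "\<alpha> \<noteq> \<beta>"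
  then have "int \<beta> - int \<alpha> \<noteq> 0" by simp
  from dvd_imp_le_int[OF this dv] have "\<bar>int A\<bar> \<le> \<bar>int \<beta> - int \<alpha>\<bar>" .
  then show False using l1 l2 by arith
qed

lemma key_count:
  fixes La :: "'n list" and Lb :: "'m list" and a :: "'n \<Rightarrow> nat" and b :: "'m \<Rightarrow> nat"
  assumes pa: "\<forall>i. a i \<ge> 1" and pb: "\<forall>j. b j \<ge> 1"
    and eqa: "sum_list (map a La) = A" and eqb: "sum_list (map b Lb) = A"
    and noSub: "\<And>Sa Sb. (\<forall>i. count_list Sa i \<le> count_list La i) \<Longrightarrow>
        (\<forall>j. count_list Sb j \<le> count_list Lb j) \<Longrightarrow>
        sum_list (map a Sa) = sum_list (map b Sb) \<Longrightarrow>
        (Sa = [] \<and> Sb = []) \<or> length Sa = length La"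
  shows "length La * length Lb \<le> A"
proof -
  define X where "X = length La"
  define Y where "Y = length Lb"
  define PA where "PA k = sum_list (map a (take k La))" for k
  define PB where "PB l = sum_list (map b (take l Lb))" for l
  define F where "F = (\<lambda>(k,l). (int (PA k) - int (PB l)) mod int A)"
  have PAlt: "PA k < A" if "k < X" for k
  proof -
    have "A = PA k + sum_list (map a (drop k La))"
      unfolding PA_def eqa[symmetric] by (metis append_take_drop_id map_append sum_list_append)
    moreover have "sum_list (map a (drop k La)) \<ge> length (drop k La)"
      using sum_list_ge_length pa by blast
    ultimately show ?thesis using that X_def by simp
  qed
  have PBlt: "PB l < A" if "l < Y" for l
  proof -
    have "A = PB l + sum_list (map b (drop l Lb))"
      unfolding PB_def eqb[symmetric] by (metis append_take_drop_id map_append sum_list_append)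
    moreover have "sum_list (map b (drop l Lb)) \<ge> length (drop l Lb)"
      using sum_list_ge_length pb by blast
    ultimately show ?thesis using that Y_def by simp
  qed
  have PAsplit: "PA k' = PA k + sum_list (map a (drop k (take k' La)))" if "k \<le> k'" for k k'
    unfolding PA_def using take_split[OF that, of La] by (metis map_append sum_list_append)
  have PBsplit: "PB l' = PB l + sum_list (map b (drop l (take l' Lb)))" if "l \<le> l'" for l l'
    unfolding PB_def using take_split[OF that, of Lb] by (metis map_append sum_list_append)
  have PBtot: "A = PB l + sum_list (map b (drop l Lb))" for l
    unfolding PB_def eqb[symmetric] by (metis append_take_drop_id map_append sum_list_append)
  have main: "k = k' \<and> l = l'"
    if "k \<le> k'" "k' < X" "l < Y" "l' < Y" "F (k,l) = F (k',l')" for k k' l l'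
  proof -
    define Sa where "Sa = drop k (take k' La)"
    define \<alpha> where "\<alpha> = sum_list (map a Sa)"
    have lenSa: "length Sa = k' - k" using that X_def Sa_def by simp
    have cSa: "\<forall>i. count_list Sa i \<le> count_list La i"
      unfolding Sa_def by (meson count_drop_le count_take_le le_trans)
    have PAk': "PA k' = PA k + \<alpha>" using PAsplit[OF that(1)] Sa_def \<alpha>_def by simp
    have \<alpha>lt: "\<alpha> < A" using PAlt[OF that(2)] PAk' by simp
    have dv: "int A dvd (int (PA k) - int (PB l)) - (int (PA k') - int (PB l'))"
      using that(5) unfolding F_def by (simp add: mod_eq_dvd_iff)
    show ?thesis
    proof (cases "l \<le> l'")
      case True
      define Sb where "Sb = drop l (take l' Lb)"
      define \<beta> where "\<beta> = sum_list (map b Sb)"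
      have PBl': "PB l' = PB l + \<beta>" using PBsplit[OF True] Sb_def \<beta>_def by simp
      have \<beta>lt: "\<beta> < A" using PBlt[OF that(4)] PBl' by simp
      have "int A dvd int \<beta> - int \<alpha>" using dv PAk' PBl' by (simp add: algebra_simps)
      then have "\<alpha> = \<beta>" using \<alpha>lt \<beta>lt by (rule dvd_lt_eq)
      moreover have cSb: "\<forall>j. count_list Sb j \<le> count_list Lb j"
        unfolding Sb_def by (meson count_drop_le count_take_le le_trans)
      ultimately have "(Sa = [] \<and> Sb = []) \<or> length Sa = length La"
        using noSub cSa \<alpha>_def \<beta>_def by blast
      then show ?thesis using lenSa that X_def True unfolding Sb_def
        by (auto simp: Y_def)
    next
      case False
      define Sb where "Sb = drop l Lb @ take l' Lb"
      define \<beta> where "\<beta> = sum_list (map b Sb)"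
      have PBl: "PB l = PB l' + sum_list (map b (drop l' (take l Lb)))"
        using PBsplit False by simp
      have "sum_list (map b (drop l' (take l Lb))) \<ge> length (drop l' (take l Lb))"
        using sum_list_ge_length pb by blast
      then have gt: "PB l > PB l'" using PBl False that(3) Y_def by simp
      have \<beta>eq: "\<beta> = (A - PB l) + PB l'"
        using PBtot[of l] unfolding \<beta>_def Sb_def PB_def by simp
      have \<beta>lt: "\<beta> < A" using \<beta>eq gt PBlt[OF that(3)] by simp
      have "int A dvd int \<beta> - int \<alpha>"
      proof -
        have "int \<beta> - int \<alpha> = ((int (PA k) - int (PB l)) - (int (PA k') - int (PB l'))) + int A"
          using \<beta>eq PAk' PBlt[OF that(3)] by (simp add: algebra_simps of_nat_diff)
        then show ?thesis using dv by simp
      qed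
      then have "\<alpha> = \<beta>" using \<alpha>lt \<beta>lt by (rule dvd_lt_eq)
      moreover have cSb: "\<forall>j. count_list Sb j \<le> count_list Lb j"
      proof
        fix j
        have e: "take l Lb = take l' Lb @ drop l' (take l Lb)" using take_split[of l' l Lb] False by simp
        have "count_list (take l' Lb) j \<le> count_list (take l Lb) j"
          by (subst e) (simp add: count_list_append)
        moreover have "count_list Lb j = count_list (take l Lb) j + count_list (drop l Lb) j"
          by (metis append_take_drop_id count_list_append)
        ultimately show "count_list Sb j \<le> count_list Lb j"
          unfolding Sb_def by (simp add: count_list_append)
      qed
      ultimately have "(Sa = [] \<and> Sb = []) \<or> length Sa = length La"
        using noSub cSa \<alpha>_def \<beta>_def by blast
      moreover have "Sb \<noteq> []" using that(3) Y_def Sb_def by simp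
      ultimately show ?thesis using lenSa that X_def by auto
    qed
  qed
  have inj: "inj_on F ({..<X} \<times> {..<Y})"
  proof (rule inj_onI)
    fix p q assume p: "p \<in> {..<X} \<times> {..<Y}" and q: "q \<in> {..<X} \<times> {..<Y}" and e: "F p = F q"
    obtain k l where kl: "p = (k,l)" by force
    obtain k' l' where kl': "q = (k',l')" by force
    show "p = q"
    proof (cases "k \<le> k'")
      case True then show ?thesis using main[of k k' l l'] p q e kl kl' by auto
    next
      case False then show ?thesis using main[of k' k l' l] p q e kl kl' by auto
    qed
  qed
  show ?thesis
  proof (cases "X = 0 \<or> Y = 0")
    case True then show ?thesis using X_def Y_def by auto
  next
    case False
    then have "A > 0" using PAlt[of 0] by auto
    then have img: "F ` ({..<X} \<times> {..<Y}) \<subseteq> {0..<int A}"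
      unfolding F_def by auto
    have "X * Y = card (F ` ({..<X} \<times> {..<Y}))"
      using card_image[OF inj] by (simp add: card_cartesian_product)
    also have "\<dots> \<le> card {0..<int A}" by (rule card_mono[OF _ img]) simp
    finally show ?thesis using X_def Y_def by simp
  qed
qed

lemma sum_single:
  fixes f :: "'n::finite \<Rightarrow> 'b::comm_monoid_add"
  assumes "\<forall>k. k \<noteq> i \<longrightarrow> f k = 0"
  shows "(\<Sum>k\<in>UNIV. f k) = f i"
proof -
  have "(\<Sum>k\<in>UNIV. f k) = f i + (\<Sum>k\<in>UNIV - {i}. f k)"
    by (simp add: sum.remove)
  also have "(\<Sum>k\<in>UNIV - {i}. f k) = 0" using assms by (intro sum.neutral) auto
  finally show ?thesis by simp
qed

lemma gen_solution: "is_solution a b (gen a b i j)"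
proof -
  have "(\<Sum>k\<in>UNIV. fst (gen a b i j) k * a k) = b j * a i"
    by (subst sum_single[where i=i]) (auto simp: gen_def)
  moreover have "(\<Sum>k\<in>UNIV. snd (gen a b i j) k * b k) = a i * b j"
    by (subst sum_single[where i=j]) (auto simp: gen_def)
  ultimately show ?thesis unfolding is_solution_def by simp
qed

lemma gen_minimal:
  fixes a :: "'n::finite \<Rightarrow> nat" and b :: "'m::finite \<Rightarrow> nat"
  assumes pa: "\<forall>i. a i \<ge> 1" and pb: "\<forall>j. b j \<ge> 1" and cop: "coprime (a i) (b j)"
  shows "is_minimal_solution a b (gen a b i j)"
proof -
  have nz: "gen a b i j \<noteq> zero_sol"
  proof
    assume "gen a b i j = zero_sol"
    then have "fst (gen a b i j) i = 0" by (simp add: zero_sol_def)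
    moreover have "b j \<ge> 1" using pb by blast
    ultimately show False by (simp add: gen_def)
  qed
  have nodec: False if u: "is_solution a b u" and v: "is_solution a b v"
     and un: "u \<noteq> zero_sol" and vn: "v \<noteq> zero_sol" and e: "gen a b i j = add_sol u v" for u v
  proof -
    have cx: "fst (gen a b i j) k = fst u k + fst v k" for k using e by (simp add: add_sol_def)
    have cy: "snd (gen a b i j) k = snd u k + snd v k" for k using e by (simp add: add_sol_def)
    have ux0: "fst u k = 0" if "k \<noteq> i" for k using cx[of k] that by (simp add: gen_def)
    have vx0: "fst v k = 0" if "k \<noteq> i" for k using cx[of k] that by (simp add: gen_def)
    have uy0: "snd u k = 0" if "k \<noteq> j" for k using cy[of k] that by (simp add: gen_def)
    have vy0: "snd v k = 0" if "k \<noteq> j" for k using cy[of k] that by (simp add: gen_def)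
    have xi: "fst u i + fst v i = b j" using cx[of i] by (simp add: gen_def)
    have yj: "snd u j + snd v j = a i" using cy[of j] by (simp add: gen_def)
    have ueq: "fst u i * a i = snd u j * b j"
    proof -
      have "(\<Sum>k\<in>UNIV. fst u k * a k) = fst u i * a i"
        by (rule sum_single) (simp add: ux0)
      moreover have "(\<Sum>k\<in>UNIV. snd u k * b k) = snd u j * b j"
        by (rule sum_single) (simp add: uy0)
      ultimately show ?thesis using u unfolding is_solution_def by simp
    qed
    have "b j dvd fst u i * a i" using ueq by simp
    then have "b j dvd fst u i" using cop
      by (metis coprime_commute coprime_dvd_mult_left_iff)
    moreover have "fst u i \<le> b j" using xi by simp
    ultimately have "fst u i = 0 \<or> fst u i = b j"
      by (metis dvd_imp_le le_antisym neq0_conv)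
    then show False
    proof
      assume "fst u i = 0"
      moreover have "b j \<ge> 1" using pb by blast
      ultimately have "snd u j = 0" using ueq by simp
      have "fst u = (\<lambda>_. 0)" proof (rule ext) fix k show "fst u k = 0" using \<open>fst u i = 0\<close> ux0 by (cases "k = i") auto qed
      moreover have "snd u = (\<lambda>_. 0)" proof (rule ext) fix k show "snd u k = 0" using \<open>snd u j = 0\<close> uy0 by (cases "k = j") auto qed
      ultimately have "u = zero_sol" unfolding zero_sol_def by (simp add: prod_eq_iff)
      then show False using un by simp
    next
      assume h: "fst u i = b j"
      moreover have "b j \<ge> 1" using pb by blast
      ultimately have "snd u j = a i" using ueq by (simp add: mult.commute)
      then have v1: "fst v i = 0" and v2: "snd v j = 0" using xi yj h by simp_all
      have "fst v = (\<lambda>_. 0)" proof (rule ext) fix k show "fst v k = 0" using v1 vx0 by (cases "k = i") auto qed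
      moreover have "snd v = (\<lambda>_. 0)" proof (rule ext) fix k show "snd v k = 0" using v2 vy0 by (cases "k = j") auto qed
      ultimately have "v = zero_sol" unfolding zero_sol_def by (simp add: prod_eq_iff)
      then show False using vn by simp
    qed
  qed
  show ?thesis unfolding is_minimal_solution_def using gen_solution nz nodec by blast
qed



lemma exists_list_count:
  fixes f :: "'n::finite \<Rightarrow> nat"
  shows "\<exists>L. \<forall>i. count_list L i = f i"
proof -
  define M where "M = (\<Sum>k\<in>UNIV. replicate_mset (f k) k)"
  obtain L where L: "mset L = M" using ex_mset by blast
  have "count_list L i = f i" for i
  proof -
    have "count_list L i = count M i" by (simp add: L[symmetric] count_mset)
    also have "\<dots> = (\<Sum>k\<in>UNIV. count (replicate_mset (f k) k) i)"
      unfolding M_def by (simp add: count_sum)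
    also have "\<dots> = count (replicate_mset (f i) i) i"
      by (rule sum_single) auto
    finally show ?thesis by simp
  qed
  then show ?thesis by blast
qed

lemma minimal_bound:
  fixes a :: "'n::finite \<Rightarrow> nat" and b :: "'m::finite \<Rightarrow> nat"
  assumes pa: "\<forall>i. a i \<ge> 1" and pb: "\<forall>j. b j \<ge> 1"
    and ms: "is_minimal_solution a b s"
  shows "(\<Sum>i\<in>UNIV. fst s i) * (\<Sum>j\<in>UNIV. snd s j) \<le> (\<Sum>i\<in>UNIV. fst s i * a i)"
proof -
  obtain La :: "'n list" where cLa: "\<forall>i. count_list La i = fst s i"
    using exists_list_count by blast
  obtain Lb :: "'m list" where cLb: "\<forall>j. count_list Lb j = snd s j"
    using exists_list_count by blast
  define A where "A = (\<Sum>i\<in>UNIV. fst s i * a i)"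
  have sol: "is_solution a b s" and nz: "s \<noteq> zero_sol"
    and nodec: "\<not> (\<exists>u v. is_solution a b u \<and> is_solution a b v \<and> u \<noteq> zero_sol \<and> v \<noteq> zero_sol
              \<and> s = add_sol u v)"
    using ms unfolding is_minimal_solution_def by blast+
  have B: "(\<Sum>j\<in>UNIV. snd s j * b j) = A" using sol unfolding is_solution_def A_def by simp
  have eqa: "sum_list (map a La) = A" unfolding sum_list_count A_def using cLa by simp
  have eqb: "sum_list (map b Lb) = A" unfolding sum_list_count B[symmetric] using cLb by simp
  have noSub: "(Sa = [] \<and> Sb = []) \<or> length Sa = length La"
    if ca: "\<forall>i. count_list Sa i \<le> count_list La i"
    and cb: "\<forall>j. count_list Sb j \<le> count_list Lb j"
    and se: "sum_list (map a Sa) = sum_list (map b Sb)" for Sa :: "'n list" and Sb :: "'m list"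
  proof -
    define u where "u = ((\<lambda>i. count_list Sa i), (\<lambda>j. count_list Sb j))"
    define v where "v = ((\<lambda>i. fst s i - count_list Sa i), (\<lambda>j. snd s j - count_list Sb j))"
    have usol: "is_solution a b u" using se unfolding is_solution_def u_def sum_list_count by simp
    have "(\<Sum>i\<in>UNIV. fst v i * a i) = (\<Sum>i\<in>UNIV. fst s i * a i - count_list Sa i * a i)"
      unfolding v_def by (simp add: diff_mult_distrib)
    also have "\<dots> = A - (\<Sum>i\<in>UNIV. count_list Sa i * a i)"
      unfolding A_def using ca cLa by (intro sum_subtractf_nat) (simp add: mult_right_mono)
    finally have v1: "(\<Sum>i\<in>UNIV. fst v i * a i) = A - sum_list (map a Sa)"
      by (simp add: sum_list_count)
    have "(\<Sum>j\<in>UNIV. snd v j * b j) = (\<Sum>j\<in>UNIV. snd s j * b j - count_list Sb j * b j)"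
      unfolding v_def by (simp add: diff_mult_distrib)
    also have "\<dots> = A - (\<Sum>j\<in>UNIV. count_list Sb j * b j)"
      unfolding B[symmetric] using cb cLb by (intro sum_subtractf_nat) (simp add: mult_right_mono)
    finally have v2: "(\<Sum>j\<in>UNIV. snd v j * b j) = A - sum_list (map b Sb)"
      by (simp add: sum_list_count)
    have vsol: "is_solution a b v" unfolding is_solution_def using v1 v2 se by simp
    have "s = add_sol u v"
      unfolding add_sol_def u_def v_def using ca cb cLa cLb by (simp add: prod_eq_iff fun_eq_iff)
    then have "u = zero_sol \<or> v = zero_sol" using nodec usol vsol by blast
    then show ?thesis
    proof
      assume "u = zero_sol"
      then have "\<forall>i. count_list Sa i = 0" "\<forall>j. count_list Sb j = 0"
        unfolding u_def zero_sol_def by (simp_all add: fun_eq_iff)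
      then have "Sa = [] \<and> Sb = []"
        by (metis count_list_0_iff list.set_intros(1) neq_Nil_conv)
      then show ?thesis by blast
    next
      assume "v = zero_sol"
      then have "\<forall>i. fst s i - count_list Sa i = 0"
        unfolding v_def zero_sol_def by (simp add: fun_eq_iff)
      then have "\<forall>i. count_list Sa i = count_list La i" using ca cLa by (metis diff_is_0_eq le_antisym)
      then have "length Sa = length La" by (simp add: length_count)
      then show ?thesis by blast
    qed
  qed
  have "length La * length Lb \<le> A"
    by (rule key_count[OF pa pb eqa eqb noSub]) auto
  moreover have "length La = (\<Sum>i\<in>UNIV. fst s i)" using cLa by (simp add: length_count)
  moreover have "length Lb = (\<Sum>j\<in>UNIV. snd s j)" using cLb by (simp add: length_count)
  ultimately show ?thesis unfolding A_def by simp
qed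



lemma sum_option:
  fixes f :: "'p::finite option \<Rightarrow> 'b::comm_monoid_add"
  shows "(\<Sum>q\<in>UNIV. f q) = f None + (\<Sum>p\<in>UNIV. f (Some p))"
proof -
  have "(\<Sum>q\<in>UNIV. f q) = (\<Sum>q\<in>insert None (range Some). f q)" by (simp add: UNIV_option_conv)
  also have "\<dots> = f None + (\<Sum>q\<in>range Some. f q)" by (subst sum.insert) auto
  also have "(\<Sum>q\<in>range Some. f q) = (\<Sum>p\<in>UNIV. f (Some p))"
    by (subst sum.reindex) (auto simp: inj_on_def)
  finally show ?thesis .
qed

lemma sum_pairs:
  fixes f :: "'n::finite \<times> 'm::finite \<Rightarrow> 'b::comm_monoid_add"
  shows "(\<Sum>p\<in>UNIV. f p) = (\<Sum>i\<in>UNIV. \<Sum>j\<in>UNIV. f (i,j))"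
proof -
  have "(\<Sum>i\<in>UNIV. \<Sum>j\<in>UNIV. f (i,j)) = (\<Sum>(i,j)\<in>UNIV \<times> UNIV. f (i,j))"
    by (rule sum.cartesian_product)
  then show ?thesis by simp
qed

lemma inner_emb_gen:
  "inner ((\<chi> k. \<alpha> k), (\<chi> l. \<beta> l)) (emb (gen a b i j)) = \<alpha> i * real (b j) + \<beta> j * real (a i)"
proof -
  have "inner ((\<chi> k. \<alpha> k), (\<chi> l. \<beta> l)) (emb (gen a b i j))
     = (\<Sum>k\<in>UNIV. \<alpha> k * real (if k = i then b j else 0)) + (\<Sum>l\<in>UNIV. \<beta> l * real (if l = j then a i else 0))"
    by (simp add: emb_def gen_def inner_vec_def)
  also have "(\<Sum>k\<in>UNIV. \<alpha> k * real (if k = i then b j else 0)) = \<alpha> i * real (b j)"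
    by (subst sum_single[where i=i]) auto
  also have "(\<Sum>l\<in>UNIV. \<beta> l * real (if l = j then a i else 0)) = \<beta> j * real (a i)"
    by (subst sum_single[where i=j]) auto
  finally show ?thesis .
qed

lemma emb_zero: "emb zero_sol = 0"
  by (simp add: emb_def zero_sol_def zero_prod_def vec_eq_iff)

lemma in_hull:
  fixes a :: "'n::finite \<Rightarrow> nat" and b :: "'m::finite \<Rightarrow> nat"
  assumes pa: "\<forall>i. a i \<ge> 1" and pb: "\<forall>j. b j \<ge> 1"
    and ms: "is_minimal_solution a b s"
  shows "emb s \<in> convex hull (insert 0 {emb (gen a b i j) | i j. True})"
proof -
  let ?T = "insert 0 {emb (gen a b i j) | i j. True}"
  define A where "A = (\<Sum>i\<in>UNIV. fst s i * a i)"
  have sol: "is_solution a b s" and nz: "s \<noteq> zero_sol"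
    using ms unfolding is_minimal_solution_def by blast+
  have B: "(\<Sum>j\<in>UNIV. snd s j * b j) = A" using sol unfolding is_solution_def A_def by simp
  have bound: "(\<Sum>i\<in>UNIV. fst s i) * (\<Sum>j\<in>UNIV. snd s j) \<le> A"
    using minimal_bound[OF pa pb ms] A_def by simp
  have Apos: "A > 0"
  proof (rule ccontr)
    assume "\<not> A > 0"
    then have A0: "A = 0" by simp
    have "fst s i = 0" for i
    proof -
      have "fst s i * a i = 0" using A0 unfolding A_def by simp
      moreover have "a i \<ge> 1" using pa by blast
      ultimately show ?thesis by simp
    qed
    moreover have "snd s j = 0" for j
    proof -
      have "snd s j * b j = 0" using A0 B by simp
      moreover have "b j \<ge> 1" using pb by blast
      ultimately show ?thesis by simp
    qed
    ultimately have "s = zero_sol" unfolding zero_sol_def by (simp add: prod_eq_iff fun_eq_iff)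
    then show False using nz by simp
  qed
  define \<mu> where "\<mu> p = real (fst s (fst p)) * real (snd s (snd p)) / real A" for p :: "'n \<times> 'm"
  define \<sigma> where "\<sigma> = (\<Sum>p\<in>UNIV. \<mu> p)"
  have \<sigma>eq: "\<sigma> = real ((\<Sum>i\<in>UNIV. fst s i) * (\<Sum>j\<in>UNIV. snd s j)) / real A"
    unfolding \<sigma>_def \<mu>_def sum_pairs
    by (simp add: sum_divide_distrib[symmetric] sum_product)
  have \<sigma>le: "\<sigma> \<le> 1"
  proof -
    have h: "real ((\<Sum>i\<in>UNIV. fst s i) * (\<Sum>j\<in>UNIV. snd s j)) \<le> real A"
      using bound by (simp only: of_nat_le_iff)
    have "real A > 0" using Apos by simp
    then show ?thesis unfolding \<sigma>eq using h by (metis divide_le_eq_1)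
  qed
  define w where "w q = (case q of None \<Rightarrow> 1 - \<sigma> | Some p \<Rightarrow> \<mu> p)" for q
  define z where "z q = (case q of None \<Rightarrow> 0 | Some p \<Rightarrow> emb (gen a b (fst p) (snd p)))" for q
  have "(\<Sum>q\<in>UNIV. w q *\<^sub>R z q) \<in> convex hull ?T"
  proof (rule convex_sum)
    show "finite (UNIV :: ('n \<times> 'm) option set)" by simp
    show "convex (convex hull ?T)" by simp
    show "(\<Sum>q\<in>UNIV. w q) = 1" unfolding sum_option w_def \<sigma>_def by simp
    show "0 \<le> w q" for q using \<sigma>le unfolding w_def \<mu>_def by (cases q) auto
    show "z q \<in> convex hull ?T" for q
      by (rule hull_inc) (cases q, auto simp: z_def)
  qed
  moreover have "(\<Sum>q\<in>UNIV. w q *\<^sub>R z q) = emb s"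
  proof -
    have S: "(\<Sum>q\<in>UNIV. w q *\<^sub>R z q) = (\<Sum>p\<in>UNIV. \<mu> p *\<^sub>R emb (gen a b (fst p) (snd p)))"
      unfolding sum_option w_def z_def by simp
    have X: "fst (\<Sum>p\<in>UNIV. \<mu> p *\<^sub>R emb (gen a b (fst p) (snd p))) $ k = real (fst s k)" for k
    proof -
      have "fst (\<Sum>p\<in>UNIV. \<mu> p *\<^sub>R emb (gen a b (fst p) (snd p))) $ k
          = (\<Sum>i\<in>UNIV. \<Sum>j\<in>UNIV. \<mu> (i,j) * real (if k = i then b j else 0))"
        apply (simp add: fst_sum sum_pairs emb_def gen_def)
        apply (intro sum.cong refl)
        apply simp
        done
      also have "\<dots> = (\<Sum>j\<in>UNIV. \<mu> (k,j) * real (b j))"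
        by (subst sum_single[where i=k]) auto
      also have "\<dots> = real (fst s k) / real A * (\<Sum>j\<in>UNIV. real (snd s j * b j))"
        unfolding \<mu>_def sum_distrib_left by (intro sum.cong refl) (simp add: field_simps)
      also have "(\<Sum>j\<in>UNIV. real (snd s j * b j)) = real A"
        using B by (metis of_nat_sum)
      finally show ?thesis using Apos by simp
    qed
    have Y: "snd (\<Sum>p\<in>UNIV. \<mu> p *\<^sub>R emb (gen a b (fst p) (snd p))) $ l = real (snd s l)" for l
    proof -
      have "snd (\<Sum>p\<in>UNIV. \<mu> p *\<^sub>R emb (gen a b (fst p) (snd p))) $ l
          = (\<Sum>i\<in>UNIV. \<Sum>j\<in>UNIV. \<mu> (i,j) * real (if l = j then a i else 0))"
        apply (simp add: snd_sum sum_pairs emb_def gen_def)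
        apply (intro sum.cong refl)
        apply simp
        done
      also have "\<dots> = (\<Sum>i\<in>UNIV. \<mu> (i,l) * real (a i))"
        by (intro sum.cong refl, subst sum_single[where i=l]) auto
      also have "\<dots> = real (snd s l) / real A * (\<Sum>i\<in>UNIV. real (fst s i * a i))"
        unfolding \<mu>_def sum_distrib_left by (intro sum.cong refl) (simp add: field_simps)
      also have "(\<Sum>i\<in>UNIV. real (fst s i * a i)) = real A"
        unfolding A_def by (metis of_nat_sum)
      finally show ?thesis using Apos by simp
    qed
    show ?thesis unfolding S using X Y by (simp add: emb_def prod_eq_iff vec_eq_iff)
  qed
  ultimately show ?thesis by simp
qed



lemma zero_notin:
  fixes a :: "'n::finite \<Rightarrow> nat" and b :: "'m::finite \<Rightarrow> nat"
  assumes pa: "\<forall>i. a i \<ge> 1" and pb: "\<forall>j. b j \<ge> 1"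
  shows "0 \<notin> convex hull {emb (gen a b i j) | i j. True}"
proof -
  define c :: "(real^'n) \<times> (real^'m)" where "c = ((\<chi> k. 1), (\<chi> l. 1))"
  have "convex hull {emb (gen a b i j) | i j. True} \<subseteq> {x. inner c x > 0}"
  proof (rule hull_minimal)
    show "convex {x. inner c x > 0}" by (rule convex_halfspace_gt)
    show "{emb (gen a b i j) | i j. True} \<subseteq> {x. inner c x > 0}"
    proof
      fix x assume "x \<in> {emb (gen a b i j) | i j. True}"
      then obtain i j where x: "x = emb (gen a b i j)" by blast
      have "a i \<ge> 1" "b j \<ge> 1" using pa pb by blast+
      then have "inner c (emb (gen a b i j)) > 0"
        unfolding c_def inner_emb_gen by simp
      then show "x \<in> {x. inner c x > 0}" using x by simp
    qed
  qed
  then show ?thesis by auto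
qed

lemma gen_notin:
  fixes a :: "'n::finite \<Rightarrow> nat" and b :: "'m::finite \<Rightarrow> nat"
  assumes pa: "\<forall>i. a i \<ge> 1" and pb: "\<forall>j. b j \<ge> 1"
  shows "emb (gen a b i j) \<notin> convex hull (insert 0 {emb (gen a b i j) | i j. True} - {emb (gen a b i j)})"
proof -
  define C :: real where "C = real ((\<Sum>k\<in>UNIV. a k) + (\<Sum>l\<in>UNIV. b l))"
  define c :: "(real^'n) \<times> (real^'m)" where
    "c = ((\<chi> k. if k = i then real (a i) else - C), (\<chi> l. if l = j then real (b j) else - C))"
  have ai: "a i' \<ge> 1" for i' using pa by blast
  have bj: "b j' \<ge> 1" for j' using pb by blast
  have Cge_a: "C \<ge> real (a i') + 1" for i'
  proof -
    have "a i' \<le> (\<Sum>k\<in>UNIV. a k)" by (rule member_le_sum) auto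
    moreover have "b j \<le> (\<Sum>l\<in>UNIV. b l)" by (rule member_le_sum) auto
    ultimately have "a i' + 1 \<le> (\<Sum>k\<in>UNIV. a k) + (\<Sum>l\<in>UNIV. b l)" using bj[of j] by linarith
    then have "real (a i' + 1) \<le> C" unfolding C_def by (simp only: of_nat_le_iff)
    then show ?thesis by simp
  qed
  have Cge_b: "C \<ge> real (b j') + 1" for j'
  proof -
    have "b j' \<le> (\<Sum>l\<in>UNIV. b l)" by (rule member_le_sum) auto
    moreover have "a i \<le> (\<Sum>k\<in>UNIV. a k)" by (rule member_le_sum) auto
    ultimately have "b j' + 1 \<le> (\<Sum>k\<in>UNIV. a k) + (\<Sum>l\<in>UNIV. b l)" using ai[of i] by linarith
    then have "real (b j' + 1) \<le> C" unfolding C_def by (simp only: of_nat_le_iff)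
    then show ?thesis by simp
  qed
  have val: "inner c (emb (gen a b i j)) = 2 * real (a i) * real (b j)"
    unfolding c_def inner_emb_gen by simp
  have pos: "2 * real (a i) * real (b j) > 0" using ai[of i] bj[of j] by simp
  have "convex hull (insert 0 {emb (gen a b i j) | i j. True} - {emb (gen a b i j)})
        \<subseteq> {x. inner c x < 2 * real (a i) * real (b j)}"
  proof (rule hull_minimal)
    show "convex {x. inner c x < 2 * real (a i) * real (b j)}" by (rule convex_halfspace_lt)
    show "insert 0 {emb (gen a b i j) | i j. True} - {emb (gen a b i j)}
        \<subseteq> {x. inner c x < 2 * real (a i) * real (b j)}"
    proof
      fix x assume x: "x \<in> insert 0 {emb (gen a b i j) | i j. True} - {emb (gen a b i j)}"
      show "x \<in> {x. inner c x < 2 * real (a i) * real (b j)}"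
      proof (cases "x = 0")
        case True then show ?thesis using pos by simp
      next
        case False
        then obtain i' j' where x': "x = emb (gen a b i' j')" and ne: "(i',j') \<noteq> (i,j)"
          using x by auto
        have "inner c x = (if i' = i then real (a i) else - C) * real (b j')
                        + (if j' = j then real (b j) else - C) * real (a i')"
          unfolding x' c_def inner_emb_gen by simp
        also have "\<dots> < 0"
        proof (cases "i' = i")
          case True
          then have "j' \<noteq> j" using ne by simp
          then have "(if i' = i then real (a i) else - C) * real (b j')
                        + (if j' = j then real (b j) else - C) * real (a i')
                   = real (a i) * (real (b j') - C)" using True by (simp add: algebra_simps)
          also have "\<dots> < 0" using Cge_b[of j'] ai[of i] by (simp add: mult_pos_neg)
          finally show ?thesis .
        next
          case False
          note iF = False
          show ?thesis
          proof (cases "j' = j")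
            case True
            have "(if i' = i then real (a i) else - C) * real (b j')
                        + (if j' = j then real (b j) else - C) * real (a i')
                   = real (b j) * (real (a i') - C)" using True iF by (simp add: algebra_simps)
            also have "\<dots> < 0" using Cge_a[of i'] bj[of j] by (simp add: mult_pos_neg)
            finally show ?thesis .
          next
            case False
            have Cp: "C > 0" using Cge_a[of i] by simp
            have "(if i' = i then real (a i) else - C) * real (b j')
                        + (if j' = j then real (b j) else - C) * real (a i')
                   = - (C * (real (b j') + real (a i')))" using False iF by (simp add: algebra_simps)
            also have "\<dots> < 0" using Cp bj[of j'] ai[of i'] by simp
            finally show ?thesis .
          qed
        qed
        also have "0 < 2 * real (a i) * real (b j)" by (rule pos)
        finally show ?thesis by simp
      qed
    qed
  qed
  then show ?thesis using val by auto
qed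

theorem corollary3:
  fixes a :: "'n::finite \<Rightarrow> nat" and b :: "'m::finite \<Rightarrow> nat"
  assumes "\<forall>i. a i \<ge> 1" and "\<forall>j. b j \<ge> 1"
    and "\<forall>i j. coprime (a i) (b j)"
  shows "(\<forall>i j. gen a b i j \<in> hilbert_basis a b) \<and>
    {p. p extreme_point_of (convex hull (emb ` (hilbert_basis a b \<union> {zero_sol})))}
      = {0} \<union> {emb (gen a b i j) | i j. True}"
proof -
  note pa = assms(1) and pb = assms(2)
  let ?G = "{emb (gen a b i j) | i j. True}"
  let ?T = "insert 0 ?G"
  let ?H = "hilbert_basis a b"
  have part1: "\<forall>i j. gen a b i j \<in> ?H"
    using gen_minimal[OF pa pb] assms(3) unfolding hilbert_basis_def by blast
  have finG: "finite ?G"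
  proof -
    have "?G \<subseteq> (\<lambda>p. emb (gen a b (fst p) (snd p))) ` UNIV"
    proof
      fix x assume "x \<in> ?G"
      then obtain i j where x: "x = emb (gen a b i j)" by blast
      show "x \<in> range (\<lambda>p. emb (gen a b (fst p) (snd p)))"
        unfolding x by (rule image_eqI[where x="(i,j)"]) auto
    qed
    then show ?thesis by (rule finite_subset) simp
  qed
  have hulleq: "convex hull (emb ` (?H \<union> {zero_sol})) = convex hull ?T"
  proof
    show "convex hull (emb ` (?H \<union> {zero_sol})) \<subseteq> convex hull ?T"
    proof (rule hull_minimal)
      show "convex (convex hull ?T)" by simp
      show "emb ` (?H \<union> {zero_sol}) \<subseteq> convex hull ?T"
      proof
        fix x assume "x \<in> emb ` (?H \<union> {zero_sol})"
        then obtain s where s: "s \<in> ?H \<union> {zero_sol}" and x: "x = emb s" by blast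
        show "x \<in> convex hull ?T"
        proof (cases "s = zero_sol")
          case True
          then have "x = 0" using x emb_zero by simp
          then show ?thesis by (simp add: hull_inc)
        next
          case False
          then have "is_minimal_solution a b s" using s unfolding hilbert_basis_def by auto
          then show ?thesis using in_hull[OF pa pb] x by blast
        qed
      qed
    qed
    show "convex hull ?T \<subseteq> convex hull (emb ` (?H \<union> {zero_sol}))"
    proof (rule hull_mono)
      show "?T \<subseteq> emb ` (?H \<union> {zero_sol})"
      proof
        fix x assume "x \<in> ?T"
        then show "x \<in> emb ` (?H \<union> {zero_sol})"
        proof
          assume "x = 0" then show ?thesis using emb_zero by (metis UnI2 image_eqI singletonI)
        next
          assume "x \<in> ?G"
          then obtain i j where "x = emb (gen a b i j)" by blast
          then show ?thesis using part1 by blast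
        qed
      qed
    qed
  qed
  have ext: "{p. p extreme_point_of (convex hull ?T)} = ?T"
  proof
    show "{p. p extreme_point_of (convex hull ?T)} \<subseteq> ?T"
      using extreme_point_of_convex_hull by blast
    show "?T \<subseteq> {p. p extreme_point_of (convex hull ?T)}"
    proof
      fix p assume p: "p \<in> ?T"
      have fin: "finite (?T - {p})" using finG by simp
      have notin: "p \<notin> convex hull (?T - {p})"
      proof (cases "p = 0")
        case True
        have "?T - {p} \<subseteq> ?G" using True by auto
        then have "convex hull (?T - {p}) \<subseteq> convex hull ?G" by (rule hull_mono)
        then show ?thesis using zero_notin[OF pa pb] True by blast
      next
        case False
        then obtain i j where "p = emb (gen a b i j)" using p by blast
        then show ?thesis using gen_notin[OF pa pb] by blast
      qed
      have "p extreme_point_of (convex hull (insert p (?T - {p})))"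
        by (rule extreme_point_of_convex_hull_insert[OF fin notin])
      moreover have "insert p (?T - {p}) = ?T" using p by blast
      ultimately show "p \<in> {p. p extreme_point_of (convex hull ?T)}" by simp
    qed
  qed
  show ?thesis using part1 hulleq ext by simp
qed


end
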